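(* For every type $\tau$ there is a unique construction scheme over $\omega$ of type $\tau$.
   Context: A type is a sequence $\tau=\{(m_k,n_{k+1},r_{k+1})\}_{k\in\omega}$ of natural numbers with $m_0=1$; $n_k\ge2$ for $k\ge1$; every $r\in\omega$ equals $r_k$ for infinitely many $k$; $m_k>r_{k+1}$; and $m_{k+1}=r_{k+1}+(m_k-r_{k+1})n_{k+1}$ for all $k$. For a set of ordinals $X$ and $\mathcal F\subseteq[X]^{<\omega}$, $\mathcal F_k$ is the set of elements of rank $k$ in the well-founded order $(\mathcal F,\subsetneq)$; $A\sqsubseteq B$ means $A\subseteq B$ and every element of $B$ below an element of $A$ is in $A$; $A<B$ means every element of $A$ is below every element of $B$. $\mathcal F$ is a construction scheme over $X$ of type $\tau$ if (1) every finite subset of $X$ lies in a member of $\mathcal F$; (2) $|F|=m_k$ for $F\in\mathcal F_k$; (3) $E\cap F\sqsubseteq E$ and $E\cap F\sqsubseteq F$ for $E,F\in\mathcal F_k$; (4) each $F\in\mathcal F_{k+1}$ is the union of uniquely determined $F_0,\dots,F_{n_{k+1}-1}\in\mathcal F_k$ forming a $\Delta$-system with root $R(F)$, $|R(F)|=r_{k+1}$, and $R(F)<F_0\setminus R(F)<\dots<F_{n_{k+1}-1}\setminus R(F)$. *)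

theory Defs
  imports Main
begin

text \<open>A type tau is a sequence of triples indexed by k; tau k = (m_k, n_{k+1}, r_{k+1}).\<close>

definition ty_m :: "(nat \<Rightarrow> nat \<times> nat \<times> nat) \<Rightarrow> nat \<Rightarrow> nat" where
  "ty_m \<tau> k = fst (\<tau> k)"

definition ty_n :: "(nat \<Rightarrow> nat \<times> nat \<times> nat) \<Rightarrow> nat \<Rightarrow> nat" where
  "ty_n \<tau> k = fst (snd (\<tau> k))"

definition ty_r :: "(nat \<Rightarrow> nat \<times> nat \<times> nat) \<Rightarrow> nat \<Rightarrow> nat" where
  "ty_r \<tau> k = snd (snd (\<tau> k))"

definition is_type :: "(nat \<Rightarrow> nat \<times> nat \<times> nat) \<Rightarrow> bool" where
  "is_type \<tau> \<longleftrightarrow>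
     ty_m \<tau> 0 = 1 \<and>
     (\<forall>k. ty_n \<tau> k \<ge> 2) \<and>
     (\<forall>x. infinite {k. ty_r \<tau> k = x}) \<and>
     (\<forall>k. ty_m \<tau> k > ty_r \<tau> k) \<and>
     (\<forall>k. ty_m \<tau> (Suc k) = ty_r \<tau> k + (ty_m \<tau> k - ty_r \<tau> k) * ty_n \<tau> k)"

definition fam_rank :: "nat set set \<Rightarrow> nat set \<Rightarrow> nat" where
  "fam_rank \<F> A = (GREATEST j. \<exists>c :: nat \<Rightarrow> nat set. c j = A \<and> (\<forall>i\<le>j. c i \<in> \<F>) \<and>
                                   (\<forall>i<j. c i \<subset> c (Suc i)))"

definition level :: "nat set set \<Rightarrow> nat \<Rightarrow> nat set set" where
  "level \<F> k = {A \<in> \<F>. fam_rank \<F> A = k}"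

definition init_seg :: "nat set \<Rightarrow> nat set \<Rightarrow> bool" where
  "init_seg A B \<longleftrightarrow> A \<subseteq> B \<and> (\<forall>b\<in>B. \<forall>a\<in>A. b < a \<longrightarrow> b \<in> A)"

definition set_less :: "nat set \<Rightarrow> nat set \<Rightarrow> bool" where
  "set_less A B \<longleftrightarrow> (\<forall>a\<in>A. \<forall>b\<in>B. a < b)"

definition decomposes :: "nat set set \<Rightarrow> nat \<Rightarrow> nat \<Rightarrow> nat \<Rightarrow> nat set \<Rightarrow> nat set list \<Rightarrow> bool" where
  "decomposes \<F> k n r F Gs \<longleftrightarrow>
     length Gs = n \<and> set Gs \<subseteq> level \<F> k \<and> F = \<Union> (set Gs) \<and>
     (\<exists>R. (\<forall>i<n. \<forall>j<n. i \<noteq> j \<longrightarrow> Gs ! i \<inter> Gs ! j = R) \<and> card R = r \<and>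
          set_less R (Gs ! 0 - R) \<and>
          (\<forall>i. Suc i < n \<longrightarrow> set_less (Gs ! i - R) (Gs ! Suc i - R)))"

definition construction_scheme :: "(nat \<Rightarrow> nat \<times> nat \<times> nat) \<Rightarrow> nat set set \<Rightarrow> bool" where
  "construction_scheme \<tau> \<F> \<longleftrightarrow>
     (\<forall>A\<in>\<F>. finite A) \<and>
     (\<forall>A. finite A \<longrightarrow> (\<exists>F\<in>\<F>. A \<subseteq> F)) \<and>
     (\<forall>k. \<forall>F\<in>level \<F> k. card F = ty_m \<tau> k) \<and>
     (\<forall>k. \<forall>E\<in>level \<F> k. \<forall>F\<in>level \<F> k. init_seg (E \<inter> F) E \<and> init_seg (E \<inter> F) F) \<and>
     (\<forall>k. \<forall>F\<in>level \<F> (Suc k). \<exists>!Gs. decomposes \<F> k (ty_n \<tau> k) (ty_r \<tau> k) F Gs)"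

end

theory Submission
  imports Defs
begin

lemma tyD:
  assumes "is_type \<tau>"
  shows "ty_m \<tau> 0 = 1" "ty_n \<tau> k \<ge> 2" "ty_r \<tau> k < ty_m \<tau> k"
    "ty_m \<tau> (Suc k) = ty_r \<tau> k + (ty_m \<tau> k - ty_r \<tau> k) * ty_n \<tau> k"
  using assms unfolding is_type_def by auto

lemma m_Suc_gt:
  assumes "is_type \<tau>" shows "ty_m \<tau> k < ty_m \<tau> (Suc k)"
proof -
  have "(ty_m \<tau> k - ty_r \<tau> k) * 2 \<le> (ty_m \<tau> k - ty_r \<tau> k) * ty_n \<tau> k"
    using tyD(2)[OF assms, of k] by simp
  then show ?thesis using tyD(3,4)[OF assms, of k] by linarith
qed

lemma m_mono: assumes "is_type \<tau>" shows "strict_mono (ty_m \<tau>)"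
  using m_Suc_gt[OF assms] by (simp add: strict_mono_Suc_iff)

lemma m_less_iff: assumes "is_type \<tau>" shows "ty_m \<tau> i < ty_m \<tau> j \<longleftrightarrow> i < j"
  using m_mono[OF assms] by (simp add: strict_mono_less)

lemma m_le_iff: assumes "is_type \<tau>" shows "ty_m \<tau> i \<le> ty_m \<tau> j \<longleftrightarrow> i \<le> j"
  using m_mono[OF assms] by (simp add: strict_mono_less_eq)

lemma m_eq_iff: assumes "is_type \<tau>" shows "ty_m \<tau> i = ty_m \<tau> j \<longleftrightarrow> i = j"
  using m_mono[OF assms] by (simp add: strict_mono_eq)

lemma m_gt: assumes "is_type \<tau>" shows "k < ty_m \<tau> k"
proof (induction k)
  case 0 then show ?case using tyD(1)[OF assms] by simp
next
  case (Suc k) then show ?case using m_Suc_gt[OF assms, of k] by simp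
qed

definition phi :: "(nat \<Rightarrow> nat \<times> nat \<times> nat) \<Rightarrow> nat \<Rightarrow> nat \<Rightarrow> nat \<Rightarrow> nat" where
  "phi \<tau> j a x = (if x < ty_r \<tau> j then x else x + a * (ty_m \<tau> j - ty_r \<tau> j))"

fun emb :: "(nat \<Rightarrow> nat \<times> nat \<times> nat) \<Rightarrow> nat \<Rightarrow> nat \<Rightarrow> (nat \<Rightarrow> nat) \<Rightarrow> nat \<Rightarrow> nat" where
  "emb \<tau> k 0 f = id"
| "emb \<tau> k (Suc K) f = (if K < k then id else phi \<tau> K (f K) \<circ> emb \<tau> k K f)"

lemma phi_smono: "strict_mono (phi \<tau> j a)"
  unfolding strict_mono_def phi_def by auto

lemma phi_zero: "phi \<tau> j 0 = id"
  unfolding phi_def by auto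

lemma emb_le: "K \<le> k \<Longrightarrow> emb \<tau> k K f = id"
  by (cases K) auto

lemma emb_smono: "strict_mono (emb \<tau> k K f)"
proof (induction K)
  case 0 then show ?case by (simp add: strict_mono_def)
next
  case (Suc K) then show ?case using phi_smono
    by (auto simp: strict_mono_def)
qed

lemma emb_split: "i \<le> k \<Longrightarrow> k \<le> K \<Longrightarrow> emb \<tau> i K g = emb \<tau> k K g \<circ> emb \<tau> i k g"
proof (induction K)
  case 0 then show ?case by simp
next
  case (Suc K)
  show ?case
  proof (cases "k = Suc K")
    case True then show ?thesis by (simp add: emb_le)
  next
    case False
    then have "k \<le> K" using Suc.prems by simp
    then show ?thesis using Suc by auto
  qed
qed

lemma emb_cong: "(\<And>j. k \<le> j \<Longrightarrow> j < K \<Longrightarrow> f j = g j) \<Longrightarrow> emb \<tau> k K f = emb \<tau> k K g"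
  by (induction K) auto

lemma emb_zero: "(\<And>j. i \<le> j \<Longrightarrow> j < k \<Longrightarrow> g j = 0) \<Longrightarrow> emb \<tau> i k g = id"
  by (induction k) (auto simp: phi_zero)

lemma emb_one: "emb \<tau> k (Suc k) g = phi \<tau> k (g k)"
  by (simp add: emb_le)

lemma emb_bottom: "k < K \<Longrightarrow> emb \<tau> k K (f(k:=i)) = emb \<tau> (Suc k) K f \<circ> phi \<tau> k i"
proof -
  assume "k < K"
  then have "emb \<tau> k K (f(k:=i)) = emb \<tau> (Suc k) K (f(k:=i)) \<circ> emb \<tau> k (Suc k) (f(k:=i))"
    by (intro emb_split) auto
  also have "emb \<tau> (Suc k) K (f(k:=i)) = emb \<tau> (Suc k) K f" by (rule emb_cong) auto
  also have "emb \<tau> k (Suc k) (f(k:=i)) = phi \<tau> k i" by (simp add: emb_le)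
  finally show ?thesis .
qed

definition valid :: "(nat \<Rightarrow> nat \<times> nat \<times> nat) \<Rightarrow> (nat \<Rightarrow> nat) \<Rightarrow> nat \<Rightarrow> nat \<Rightarrow> bool" where
  "valid \<tau> f k K \<longleftrightarrow> (\<forall>j. k \<le> j \<longrightarrow> j < K \<longrightarrow> f j < ty_n \<tau> j)"

lemma phi_img:
  assumes "is_type \<tau>"
  shows "phi \<tau> k i ` {..<ty_m \<tau> k} = {..<ty_r \<tau> k} \<union>
     {ty_r \<tau> k + i * (ty_m \<tau> k - ty_r \<tau> k) ..< ty_r \<tau> k + i * (ty_m \<tau> k - ty_r \<tau> k) + (ty_m \<tau> k - ty_r \<tau> k)}"
    (is "?L = ?R")
proof
  show "?L \<subseteq> ?R" using tyD(3)[OF assms, of k] by (auto simp: phi_def)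
next
  show "?R \<subseteq> ?L"
  proof
    fix x assume x: "x \<in> ?R"
    show "x \<in> ?L"
    proof (cases "x < ty_r \<tau> k")
      case True
      then have "phi \<tau> k i x = x" by (simp add: phi_def)
      then show ?thesis using True tyD(3)[OF assms, of k] by (metis lessThan_iff less_trans rev_image_eqI)
    next
      case False
      define y where "y = x - i * (ty_m \<tau> k - ty_r \<tau> k)"
      have "y \<ge> ty_r \<tau> k" "y < ty_m \<tau> k" "x = y + i * (ty_m \<tau> k - ty_r \<tau> k)"
        using x False tyD(3)[OF assms, of k] by (auto simp: y_def)
      then have "phi \<tau> k i y = x" by (simp add: phi_def)
      then show ?thesis using \<open>y < ty_m \<tau> k\<close> by force
    qed
  qed
qed

lemma phi_range:
  assumes "is_type \<tau>" "i < ty_n \<tau> k"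
  shows "phi \<tau> k i ` {..<ty_m \<tau> k} \<subseteq> {..<ty_m \<tau> (Suc k)}"
proof -
  have "i * (ty_m \<tau> k - ty_r \<tau> k) + (ty_m \<tau> k - ty_r \<tau> k) \<le> (ty_m \<tau> k - ty_r \<tau> k) * ty_n \<tau> k"
    using assms(2) by (metis Suc_leI add.commute mult.commute mult_Suc_right mult_le_mono2)
  then show ?thesis unfolding phi_img[OF assms(1)] using tyD(3,4)[OF assms(1), of k] by auto
qed

lemma phi_union:
  assumes "is_type \<tau>"
  shows "(\<Union>i<ty_n \<tau> k. phi \<tau> k i ` {..<ty_m \<tau> k}) = {..<ty_m \<tau> (Suc k)}"
proof
  show "(\<Union>i<ty_n \<tau> k. phi \<tau> k i ` {..<ty_m \<tau> k}) \<subseteq> {..<ty_m \<tau> (Suc k)}"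
    using phi_range[OF assms] by blast
next
  show "{..<ty_m \<tau> (Suc k)} \<subseteq> (\<Union>i<ty_n \<tau> k. phi \<tau> k i ` {..<ty_m \<tau> k})"
  proof
    fix x assume x: "x \<in> {..<ty_m \<tau> (Suc k)}"
    let ?r = "ty_r \<tau> k" and ?d = "ty_m \<tau> k - ty_r \<tau> k"
    have d: "?d > 0" using tyD(3)[OF assms, of k] by simp
    have n2: "ty_n \<tau> k \<ge> 2" using tyD(2)[OF assms] by simp
    show "x \<in> (\<Union>i<ty_n \<tau> k. phi \<tau> k i ` {..<ty_m \<tau> k})"
    proof (cases "x < ?r")
      case True
      then have "x \<in> phi \<tau> k 0 ` {..<ty_m \<tau> k}" unfolding phi_img[OF assms] by simp
      then show ?thesis using n2 by force
    next
      case False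
      define i where "i = (x - ?r) div ?d"
      have xl: "x - ?r < ?d * ty_n \<tau> k" using x False tyD(4)[OF assms, of k] by simp
      have "i < ty_n \<tau> k" unfolding i_def using xl d
        by (simp add: div_less_iff_less_mult mult.commute)
      moreover have "i * ?d \<le> x - ?r" "x - ?r < i * ?d + ?d" unfolding i_def
        using div_mult_mod_eq[of "x - ?r" ?d] mod_less_divisor[OF d, of "x-?r"] by linarith+
      then have "x \<in> phi \<tau> k i ` {..<ty_m \<tau> k}" unfolding phi_img[OF assms] using False by auto
      ultimately show ?thesis by blast
    qed
  qed
qed

lemma phi_inter:
  assumes "is_type \<tau>" "i \<noteq> j"
  shows "phi \<tau> k i ` {..<ty_m \<tau> k} \<inter> phi \<tau> k j ` {..<ty_m \<tau> k} = {..<ty_r \<tau> k}"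
proof -
  let ?r = "ty_r \<tau> k" and ?d = "ty_m \<tau> k - ty_r \<tau> k"
  have "{?r + i * ?d ..< ?r + i * ?d + ?d} \<inter> {?r + j * ?d ..< ?r + j * ?d + ?d} = {}"
  proof (cases "i < j")
    case True
    then have "i * ?d + ?d \<le> j * ?d" by (metis Suc_leI add.commute mult_Suc mult_le_mono1)
    then show ?thesis by auto
  next
    case False
    then have "j * ?d + ?d \<le> i * ?d" using assms(2)
      by (metis Suc_leI add.commute linorder_neqE_nat mult_Suc mult_le_mono1)
    then show ?thesis by auto
  qed
  then show ?thesis unfolding phi_img[OF assms(1)] by auto
qed

lemma emb_range:
  assumes "is_type \<tau>" "valid \<tau> f k K" "k \<le> K"
  shows "emb \<tau> k K f ` {..<ty_m \<tau> k} \<subseteq> {..<ty_m \<tau> K}"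
  using assms(2,3)
proof (induction K)
  case 0 then show ?case by simp
next
  case (Suc K)
  show ?case
  proof (cases "k = Suc K")
    case True then show ?thesis by (simp add: emb_le)
  next
    case False
    then have kK: "k \<le> K" using Suc.prems by simp
    have v: "valid \<tau> f k K" using Suc.prems(1) unfolding valid_def by auto
    have fK: "f K < ty_n \<tau> K" using Suc.prems(1) kK unfolding valid_def by auto
    have "emb \<tau> k (Suc K) f ` {..<ty_m \<tau> k} = phi \<tau> K (f K) ` (emb \<tau> k K f ` {..<ty_m \<tau> k})"
      using kK by (simp add: image_comp)
    also have "\<dots> \<subseteq> phi \<tau> K (f K) ` {..<ty_m \<tau> K}" using Suc.IH[OF v kK] by blast
    also have "\<dots> \<subseteq> {..<ty_m \<tau> (Suc K)}" by (rule phi_range[OF assms(1) fK])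
    finally show ?thesis .
  qed
qed

lemma init_seg_trans: "init_seg A B \<Longrightarrow> init_seg B C \<Longrightarrow> init_seg A C"
  unfolding init_seg_def by blast

lemma init_seg_eq_card:
  assumes "init_seg A S" "init_seg B S" "finite S" "card A = card B"
  shows "A = B"
proof -
  have fA: "finite A" and fB: "finite B" using assms(1,2,3) unfolding init_seg_def
    by (auto intro: finite_subset)
  have *: "X \<subseteq> Y" if "init_seg X S" "init_seg Y S" "finite Y" "card X = card Y" for X Y
  proof (rule ccontr)
    assume "\<not> X \<subseteq> Y"
    then obtain a where a: "a \<in> X" "a \<notin> Y" by blast
    have "Y \<subseteq> X - {a}"
    proof
      fix b assume b: "b \<in> Y"
      have "a \<in> S" "b \<in> S" using a b that(1,2) unfolding init_seg_def by auto
      have "\<not> a < b" using that(2) a b \<open>a \<in> S\<close> unfolding init_seg_def by blast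
      then have "b < a" using a b by (cases "a = b") auto
      then show "b \<in> X - {a}" using that(1) b a \<open>b \<in> S\<close> unfolding init_seg_def by auto
    qed
    moreover have "finite X" using that(1) assms(3) unfolding init_seg_def by (auto intro: finite_subset)
    ultimately have "card Y \<le> card (X - {a})" by (intro card_mono) auto
    then have "card Y \<le> card X - 1" using a \<open>finite X\<close> by (simp add: card_Diff_singleton)
    moreover have "card X > 0" using a \<open>finite X\<close> by (auto simp: card_gt_0_iff)
    ultimately show False using that(4) by linarith
  qed
  show ?thesis using *[OF assms(1,2) fB assms(4)] *[OF assms(2,1) fA assms(4)[symmetric]] by blast
qed

definition dsys :: "nat \<Rightarrow> nat \<Rightarrow> nat \<Rightarrow> nat set \<Rightarrow> nat set list \<Rightarrow> bool" where
  "dsys n r m S Gs \<longleftrightarrow> length Gs = n \<and> (\<forall>i<n. finite (Gs!i) \<and> card (Gs!i) = m) \<and> S = \<Union>(set Gs) \<and>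
   (\<exists>R. (\<forall>i<n. \<forall>j<n. i \<noteq> j \<longrightarrow> Gs!i \<inter> Gs!j = R) \<and> card R = r \<and> set_less R (Gs!0 - R) \<and>
        (\<forall>i. Suc i < n \<longrightarrow> set_less (Gs!i - R) (Gs!Suc i - R)))"

lemma dsys_basic:
  assumes "dsys n r m S Gs" "2 \<le> n" "r < m"
  obtains R where "\<forall>i<n. \<forall>j<n. i\<noteq>j \<longrightarrow> Gs!i \<inter> Gs!j = R" "card R = r" "finite R"
    "\<forall>i<n. R \<subseteq> Gs!i" "\<forall>i<n. Gs!i - R \<noteq> {}"
    "\<forall>l<n. set_less R (Gs!l - R)" "\<forall>i l. i < l \<longrightarrow> l < n \<longrightarrow> set_less (Gs!i - R) (Gs!l - R)"
proof -
  obtain R where R1: "\<forall>i<n. \<forall>j<n. i\<noteq>j \<longrightarrow> Gs!i \<inter> Gs!j = R" and R2: "card R = r"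
    and R3: "set_less R (Gs!0 - R)" and R4: "\<forall>i. Suc i < n \<longrightarrow> set_less (Gs!i - R) (Gs!Suc i - R)"
    using assms(1) unfolding dsys_def by blast
  have fin: "\<forall>i<n. finite (Gs!i) \<and> card (Gs!i) = m" using assms(1) unfolding dsys_def by blast
  have sub: "\<forall>i<n. R \<subseteq> Gs!i"
  proof (intro allI impI)
    fix i assume i: "i < n"
    show "R \<subseteq> Gs!i"
    proof (cases "i = 0")
      case True
      have "Gs!0 \<inter> Gs!1 = R" using R1 assms(2) by simp
      then show ?thesis using True by blast
    next
      case False
      have "Gs!i \<inter> Gs!0 = R" using R1 i False by simp
      then show ?thesis by blast
    qed
  qed
  have finR: "finite R"
  proof -
    have "R \<subseteq> Gs!0" "finite (Gs!0)" using sub fin assms(2) by simp_all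
    then show ?thesis by (rule finite_subset)
  qed
  have ne: "\<forall>i<n. Gs!i - R \<noteq> {}"
  proof (intro allI impI)
    fix i assume i: "i < n"
    have "card (Gs!i - R) = m - r" using fin sub i R2 finR by (simp add: card_Diff_subset)
    then show "Gs!i - R \<noteq> {}" using assms(3) by (intro notI) simp
  qed
  have o1: "\<forall>l<n. set_less R (Gs!l - R)"
  proof (intro allI)
    fix l show "l < n \<longrightarrow> set_less R (Gs!l - R)"
    proof (induction l)
      case 0 then show ?case using R3 by simp
    next
      case (Suc l)
      show ?case
      proof
        assume l: "Suc l < n"
        have "Gs!l - R \<noteq> {}" using ne l by simp
        then obtain z where z: "z \<in> Gs!l - R" by blast
        have "set_less R (Gs!l - R)" using Suc.IH l by simp
        moreover have "set_less (Gs!l - R) (Gs!Suc l - R)" using R4 l by simp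
        ultimately show "set_less R (Gs!Suc l - R)" using z unfolding set_less_def by (meson less_trans)
      qed
    qed
  qed
  have o2: "\<forall>i l. i < l \<longrightarrow> l < n \<longrightarrow> set_less (Gs!i - R) (Gs!l - R)"
  proof (intro allI)
    fix i l show "i < l \<longrightarrow> l < n \<longrightarrow> set_less (Gs!i - R) (Gs!l - R)"
    proof (induction l)
      case 0 then show ?case by simp
    next
      case (Suc l)
      show ?case
      proof (intro impI)
        assume il: "i < Suc l" and l: "Suc l < n"
        show "set_less (Gs!i - R) (Gs!Suc l - R)"
        proof (cases "i = l")
          case True then show ?thesis using R4 l by simp
        next
          case False
          have "Gs!l - R \<noteq> {}" using ne l by simp
          then obtain z where z: "z \<in> Gs!l - R" by blast
          have "set_less (Gs!i - R) (Gs!l - R)" using Suc.IH l il False by simp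
          moreover have "set_less (Gs!l - R) (Gs!Suc l - R)" using R4 l by simp
          ultimately show ?thesis using z unfolding set_less_def by (meson less_trans)
        qed
      qed
    qed
  qed
  show ?thesis by (rule that[OF R1 R2 finR sub ne o1 o2])
qed

lemma dsys_prefix:
  assumes "dsys n r m S Gs" "2 \<le> n" "r < m"
  obtains P where "\<forall>j\<le>n. init_seg (P j) S" "\<forall>j\<le>n. card (P j) = r + j*(m-r)"
    "\<forall>j<n. Gs!j = P 0 \<union> (P (Suc j) - P j)" "finite S" "P (Suc 0) = Gs!0"
proof -
  obtain R where R1: "\<forall>i<n. \<forall>j<n. i\<noteq>j \<longrightarrow> Gs!i \<inter> Gs!j = R" and R2: "card R = r" and finR: "finite R"
    and sub: "\<forall>i<n. R \<subseteq> Gs!i" and ne: "\<forall>i<n. Gs!i - R \<noteq> {}"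
    and o1: "\<forall>l<n. set_less R (Gs!l - R)" and o2: "\<forall>i l. i < l \<longrightarrow> l < n \<longrightarrow> set_less (Gs!i - R) (Gs!l - R)"
    using dsys_basic[OF assms] by blast
  have len: "length Gs = n" and fin: "\<forall>i<n. finite (Gs!i) \<and> card (Gs!i) = m" and SU: "S = \<Union>(set Gs)"
    using assms(1) unfolding dsys_def by blast+
  have "\<forall>G\<in>set Gs. finite G" using fin len by (auto simp: in_set_conv_nth)
  then have finS: "finite S" using SU by simp
  define P where "P j = R \<union> (\<Union>i\<in>{..<j}. Gs!i)" for j
  have i1: "init_seg (P j) S" if j: "j \<le> n" for j
    unfolding init_seg_def
  proof (intro conjI ballI impI)
    have GS: "Gs!i \<subseteq> S" if "i < n" for i using that len SU nth_mem by blast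
    have "R \<subseteq> Gs!0" using sub assms(2) by simp
    then have "R \<subseteq> S" using GS[of 0] assms(2) by simp
    moreover have "Gs!i \<subseteq> S" if "i < j" for i using GS that j by simp
    ultimately show "P j \<subseteq> S" unfolding P_def by auto
  next
    fix x y assume x: "x \<in> S" and y: "y \<in> P j" and xy: "x < y"
    have "x \<in> \<Union>(set Gs)" using x SU by simp
    then obtain G where "G \<in> set Gs" "x \<in> G" by blast
    then obtain l where l: "l < n" "x \<in> Gs!l" using len by (auto simp: in_set_conv_nth)
    show "x \<in> P j"
    proof (rule ccontr)
      assume nx: "x \<notin> P j"
      then have xR: "x \<notin> R" and lj: "\<not> l < j" using l unfolding P_def by auto
      show False
      proof (cases "y \<in> R")
        case True
        have "set_less R (Gs!l - R)" using o1 l by simp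
        then have "y < x" using True xR l(2) unfolding set_less_def by blast
        then show False using xy by simp
      next
        case False
        then obtain i where i: "i < j" "y \<in> Gs!i" using y unfolding P_def by auto
        have yi: "y \<in> Gs!i - R" using i False by simp
        have "i < l" using i lj by simp
        then have "set_less (Gs!i - R) (Gs!l - R)" using o2 l by blast
        then have "y < x" using yi l xR unfolding set_less_def by blast
        then show False using xy by simp
      qed
    qed
  qed
  have step: "P (Suc j) = P j \<union> (Gs!j - R)" "P j \<inter> (Gs!j - R) = {}" if j: "j < n" for j
  proof -
    have "P (Suc j) = P j \<union> Gs!j" unfolding P_def lessThan_Suc by auto
    then show "P (Suc j) = P j \<union> (Gs!j - R)" unfolding P_def by blast
    have "Gs!i \<inter> (Gs!j - R) = {}" if "i < j" for i
    proof -
      have "Gs!i \<inter> Gs!j = R" using R1 that j by simp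
      then show ?thesis by blast
    qed
    then show "P j \<inter> (Gs!j - R) = {}" unfolding P_def by auto
  qed
  have finP: "finite (P j)" if "j \<le> n" for j
    using i1[OF that] finS unfolding init_seg_def by (auto intro: finite_subset)
  have c: "card (P j) = r + j*(m-r)" if "j \<le> n" for j
    using that
  proof (induction j)
    case 0 then show ?case unfolding P_def using R2 by simp
  next
    case (Suc j)
    have jn: "j < n" using Suc.prems by simp
    have cd: "card (Gs!j - R) = m - r" using fin sub jn R2 finR by (simp add: card_Diff_subset)
    have f1: "finite (P j)" using finP[of j] jn by simp
    have f2: "finite (Gs!j - R)" using fin jn by simp
    have "card (P (Suc j)) = card (P j) + card (Gs!j - R)" unfolding step(1)[OF jn]
      using card_Un_disjoint[OF f1 f2 step(2)[OF jn]] .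
    then show ?case using Suc.IH jn cd by simp
  qed
  have g: "Gs!j = P 0 \<union> (P (Suc j) - P j)" if j: "j < n" for j
  proof -
    have "P (Suc j) - P j = Gs!j - R" using step[OF j] by blast
    moreover have "P 0 = R" unfolding P_def by simp
    moreover have "R \<subseteq> Gs!j" using sub j by simp
    ultimately show ?thesis by blast
  qed
  have "R \<subseteq> Gs!0" using sub assms(2) by simp
  then have p1: "P (Suc 0) = Gs!0" unfolding P_def by auto
  show ?thesis by (rule that[of P]) (simp_all add: i1 c g finS p1)
qed

lemma dsys_unique:
  assumes "dsys n r m S Gs" "dsys n r m S Gs'" "2 \<le> n" "r < m"
  shows "Gs = Gs'"
proof -
  obtain P where P1: "\<forall>j\<le>n. init_seg (P j) S" and P2: "\<forall>j\<le>n. card (P j) = r + j*(m-r)"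
    and P3: "\<forall>j<n. Gs!j = P 0 \<union> (P (Suc j) - P j)" and finS: "finite S"
    by (rule dsys_prefix[OF assms(1,3,4)])
  obtain P' where P1': "\<forall>j\<le>n. init_seg (P' j) S" and P2': "\<forall>j\<le>n. card (P' j) = r + j*(m-r)"
    and P3': "\<forall>j<n. Gs'!j = P' 0 \<union> (P' (Suc j) - P' j)"
    by (rule dsys_prefix[OF assms(2,3,4)])
  have eq: "P j = P' j" if "j \<le> n" for j
  proof (rule init_seg_eq_card[of "P j" S "P' j"])
    show "init_seg (P j) S" "init_seg (P' j) S" using P1 P1' that by blast+
    show "card (P j) = card (P' j)" using P2 P2' that by simp
  qed (rule finS)
  have "length Gs = n" "length Gs' = n" using assms(1,2) unfolding dsys_def by blast+
  moreover have "Gs!j = Gs'!j" if "j < n" for j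
  proof -
    have "Gs!j = P 0 \<union> (P (Suc j) - P j)" "Gs'!j = P' 0 \<union> (P' (Suc j) - P' j)" using P3 P3' that by blast+
    moreover have "P 0 = P' 0" "P (Suc j) = P' (Suc j)" "P j = P' j" using eq that by simp_all
    ultimately show ?thesis by simp
  qed
  ultimately show ?thesis by (simp add: nth_equalityI)
qed

definition cdec :: "(nat \<Rightarrow> nat \<times> nat \<times> nat) \<Rightarrow> nat \<Rightarrow> nat \<Rightarrow> (nat \<Rightarrow> nat) \<Rightarrow> nat set list" where
  "cdec \<tau> k K f = map (\<lambda>i. emb \<tau> k K (f(k:=i)) ` {..<ty_m \<tau> k}) [0..<ty_n \<tau> k]"

lemma cdec_nth: "i < ty_n \<tau> k \<Longrightarrow> cdec \<tau> k K f ! i = emb \<tau> k K (f(k:=i)) ` {..<ty_m \<tau> k}"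
  unfolding cdec_def by simp

lemma cdec_len: "length (cdec \<tau> k K f) = ty_n \<tau> k"
  unfolding cdec_def by simp

lemma canon_dsys:
  assumes "is_type \<tau>" "k < K"
  shows "dsys (ty_n \<tau> k) (ty_r \<tau> k) (ty_m \<tau> k) (emb \<tau> (Suc k) K f ` {..<ty_m \<tau> (Suc k)}) (cdec \<tau> k K f)"
proof -
  let ?E = "emb \<tau> (Suc k) K f" and ?n = "ty_n \<tau> k" and ?r = "ty_r \<tau> k" and ?m = "ty_m \<tau> k"
  let ?d = "?m - ?r"
  define B where "B i = {?r + i * ?d ..< ?r + i * ?d + ?d}" for i
  have injE: "inj ?E" using emb_smono strict_mono_imp_inj_on by blast
  have nth: "cdec \<tau> k K f ! i = ?E ` (phi \<tau> k i ` {..<?m})" if "i < ?n" for i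
    using cdec_nth[OF that] emb_bottom[OF assms(2)] by (simp add: image_comp)
  have pimg: "phi \<tau> k i ` {..<?m} = {..<?r} \<union> B i" for i unfolding B_def by (rule phi_img[OF assms(1)])
  have pdiff: "phi \<tau> k i ` {..<?m} - {..<?r} = B i" for i unfolding pimg B_def by auto
  define R where "R = ?E ` {..<?r}"
  have n2: "?n \<ge> 2" using tyD(2)[OF assms(1)] by simp
  have diffE: "cdec \<tau> k K f ! i - R = ?E ` B i" if "i < ?n" for i
    unfolding nth[OF that] R_def image_set_diff[OF injE, symmetric] pdiff ..
  have c1: "\<forall>i<?n. finite (cdec \<tau> k K f ! i) \<and> card (cdec \<tau> k K f ! i) = ?m"
  proof (intro allI impI conjI)
    fix i assume i: "i < ?n"
    show "finite (cdec \<tau> k K f ! i)" unfolding cdec_nth[OF i] by simp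
    have "inj_on (emb \<tau> k K (f(k:=i))) {..<?m}" using emb_smono strict_mono_imp_inj_on by blast
    then show "card (cdec \<tau> k K f ! i) = ?m" unfolding cdec_nth[OF i] by (simp add: card_image)
  qed
  have c2: "emb \<tau> (Suc k) K f ` {..<ty_m \<tau> (Suc k)} = \<Union>(set (cdec \<tau> k K f))"
  proof -
    have "set (cdec \<tau> k K f) = (\<lambda>i. ?E ` (phi \<tau> k i ` {..<?m})) ` {..<?n}"
      unfolding cdec_def by (simp add: emb_bottom[OF assms(2)] image_comp atLeast0LessThan)
    then have "\<Union>(set (cdec \<tau> k K f)) = ?E ` (\<Union>i<?n. phi \<tau> k i ` {..<?m})" by auto
    then show ?thesis using phi_union[OF assms(1), of k] by simp
  qed
  have c3: "\<forall>i<?n. \<forall>j<?n. i \<noteq> j \<longrightarrow> cdec \<tau> k K f ! i \<inter> cdec \<tau> k K f ! j = R"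
  proof (intro allI impI)
    fix i j assume "i < ?n" "j < ?n" "i \<noteq> j"
    then show "cdec \<tau> k K f ! i \<inter> cdec \<tau> k K f ! j = R"
      unfolding nth[OF \<open>i < ?n\<close>] nth[OF \<open>j < ?n\<close>] R_def image_Int[OF injE, symmetric]
      using phi_inter[OF assms(1) \<open>i \<noteq> j\<close>, of k] by simp
  qed
  have c4: "card R = ?r" unfolding R_def using injE by (simp add: card_image inj_on_subset)
  have mono: "?E x < ?E y" if "x < y" for x y using emb_smono that by (simp add: strict_mono_def)
  have n0: "0 < ?n" using n2 by simp
  have c5: "set_less R (cdec \<tau> k K f ! 0 - R)"
    unfolding diffE[OF n0] unfolding set_less_def R_def B_def
    using mono by auto
  have c6: "\<forall>i. Suc i < ?n \<longrightarrow> set_less (cdec \<tau> k K f ! i - R) (cdec \<tau> k K f ! Suc i - R)"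
  proof (intro allI impI)
    fix i assume i: "Suc i < ?n"
    have "x < y" if "x \<in> B i" "y \<in> B (Suc i)" for x y using that unfolding B_def by auto
    then show "set_less (cdec \<tau> k K f ! i - R) (cdec \<tau> k K f ! Suc i - R)"
      unfolding diffE[OF i] diffE[OF Suc_lessD[OF i]] set_less_def using mono by blast
  qed
  show ?thesis unfolding dsys_def using cdec_len c1 c2 c3 c4 c5 c6 by blast
qed

lemma fin_bound: "finite (A::nat set) \<Longrightarrow> \<exists>N. A \<subseteq> {..<N}"
  by (rule exI[of _ "Suc (Max A)"]) (auto simp: le_imp_less_Suc)

definition Can :: "(nat \<Rightarrow> nat \<times> nat \<times> nat) \<Rightarrow> nat set set" where
  "Can \<tau> = {A. \<exists>k K f. k \<le> K \<and> valid \<tau> f k K \<and> A = emb \<tau> k K f ` {..<ty_m \<tau> k}}"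

lemma emb_card: "card (emb \<tau> k K f ` {..<ty_m \<tau> k}) = ty_m \<tau> k"
proof -
  have "inj_on (emb \<tau> k K f) {..<ty_m \<tau> k}" using emb_smono strict_mono_imp_inj_on by blast
  then show ?thesis by (simp add: card_image)
qed

lemma can_extend:
  assumes "is_type \<tau>" "valid \<tau> f k K" "k \<le> K" "K \<le> K'"
  shows "\<exists>g. valid \<tau> g k K' \<and> emb \<tau> k K' g = emb \<tau> k K f"
proof -
  define g where "g j = (if j < K then f j else 0)" for j
  have "emb \<tau> k K' g = emb \<tau> K K' g \<circ> emb \<tau> k K g" using assms(3,4) by (rule emb_split)
  also have "emb \<tau> K K' g = id" by (rule emb_zero) (simp add: g_def)
  also have "emb \<tau> k K g = emb \<tau> k K f" by (rule emb_cong) (simp add: g_def)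
  finally have "emb \<tau> k K' g = emb \<tau> k K f" by simp
  moreover have "valid \<tau> g k K'" unfolding valid_def
  proof (intro allI impI)
    fix j assume j: "k \<le> j" "j < K'"
    show "g j < ty_n \<tau> j"
    proof (cases "j < K")
      case True then show ?thesis using assms(2) j by (simp add: g_def valid_def)
    next
      case False then show ?thesis using tyD(2)[OF assms(1), of j] by (simp add: g_def)
    qed
  qed
  ultimately show ?thesis by blast
qed

lemma can_down:
  assumes "is_type \<tau>" "valid \<tau> f k K" "k \<le> K" "i \<le> k"
  shows "emb \<tau> k K f ` {..<ty_m \<tau> i} \<in> Can \<tau>"
proof -
  define g where "g j = (if j < k then 0 else f j)" for j
  have "emb \<tau> i K g = emb \<tau> k K g \<circ> emb \<tau> i k g" using assms(4,3) by (rule emb_split)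
  also have "emb \<tau> i k g = id" by (rule emb_zero) (simp add: g_def)
  also have "emb \<tau> k K g = emb \<tau> k K f" by (rule emb_cong) (simp add: g_def)
  finally have e: "emb \<tau> i K g = emb \<tau> k K f" by simp
  have "valid \<tau> g i K" unfolding valid_def
  proof (intro allI impI)
    fix j assume j: "i \<le> j" "j < K"
    show "g j < ty_n \<tau> j"
    proof (cases "j < k")
      case False then show ?thesis using assms(2) j by (simp add: g_def valid_def)
    next
      case True then show ?thesis using tyD(2)[OF assms(1), of j] by (simp add: g_def)
    qed
  qed
  then show ?thesis unfolding Can_def using e assms(3,4)
    by (intro CollectI exI[of _ i] exI[of _ K] exI[of _ g]) simp
qed

lemma rank_eq:
  assumes "is_type \<tau>" "\<forall>B\<in>F. finite B \<and> (\<exists>j. card B = ty_m \<tau> j)" "card A = ty_m \<tau> k"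
    "c k = A" "\<forall>i\<le>k. c i \<in> F" "\<forall>i<k. c i \<subset> c (Suc i)"
  shows "fam_rank F A = k"
  unfolding fam_rank_def
proof (rule Greatest_equality)
  show "\<exists>c. c k = A \<and> (\<forall>i\<le>k. c i \<in> F) \<and> (\<forall>i<k. c i \<subset> c (Suc i))"
    by (rule exI[of _ c]) (use assms(4,5,6) in simp)
next
  fix y assume "\<exists>d. d y = A \<and> (\<forall>i\<le>y. d i \<in> F) \<and> (\<forall>i<y. d i \<subset> d (Suc i))"
  then obtain d where d1: "d y = A" and d2: "\<forall>i\<le>y. d i \<in> F" and d3: "\<forall>i<y. d i \<subset> d (Suc i)" by blast
  have "i \<le> y \<longrightarrow> ty_m \<tau> i \<le> card (d i)" for i
  proof (induction i)
    case 0
    show ?case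
    proof
      assume "0 \<le> y"
      then obtain j where "card (d 0) = ty_m \<tau> j" using assms(2) d2 by blast
      then show "ty_m \<tau> 0 \<le> card (d 0)" using m_le_iff[OF assms(1)] by simp
    qed
  next
    case (Suc i)
    show ?case
    proof
      assume iy: "Suc i \<le> y"
      obtain j where j: "card (d (Suc i)) = ty_m \<tau> j" using assms(2) d2 iy by blast
      have "finite (d (Suc i))" using assms(2) d2 iy by blast
      then have "card (d i) < card (d (Suc i))" using d3 iy by (simp add: psubset_card_mono)
      then have "ty_m \<tau> i < ty_m \<tau> j" using Suc.IH iy j by simp
      then have "Suc i \<le> j" using m_less_iff[OF assms(1)] by simp
      then show "ty_m \<tau> (Suc i) \<le> card (d (Suc i))" using j m_le_iff[OF assms(1)] by simp
    qed
  qed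
  then have "ty_m \<tau> y \<le> card (d y)" by blast
  then have "ty_m \<tau> y \<le> ty_m \<tau> k" using d1 assms(3) by simp
  then show "y \<le> k" using m_le_iff[OF assms(1)] by simp
qed

lemma can_elems:
  assumes "A \<in> Can \<tau>"
  shows "finite A \<and> (\<exists>j. card A = ty_m \<tau> j)"
  using assms emb_card unfolding Can_def by auto

lemma can_rank:
  assumes "is_type \<tau>" "valid \<tau> f k K" "k \<le> K"
  shows "fam_rank (Can \<tau>) (emb \<tau> k K f ` {..<ty_m \<tau> k}) = k"
proof -
  have h1: "\<forall>B\<in>Can \<tau>. finite B \<and> (\<exists>j. card B = ty_m \<tau> j)" using can_elems by blast
  have h2: "card (emb \<tau> k K f ` {..<ty_m \<tau> k}) = ty_m \<tau> k" by (rule emb_card)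
  define c where "c i = emb \<tau> k K f ` {..<ty_m \<tau> i}" for i
  have h3: "c k = emb \<tau> k K f ` {..<ty_m \<tau> k}" unfolding c_def ..
  have h4: "\<forall>i\<le>k. c i \<in> Can \<tau>" unfolding c_def using can_down[OF assms] by blast
  have h5: "\<forall>i<k. c i \<subset> c (Suc i)"
  proof (intro allI impI)
    fix i assume "i < k"
    have inj: "inj (emb \<tau> k K f)" using emb_smono strict_mono_imp_inj_on by blast
    have "{..<ty_m \<tau> i} \<subset> {..<ty_m \<tau> (Suc i)}" using m_Suc_gt[OF assms(1), of i] by auto
    then show "c i \<subset> c (Suc i)" unfolding c_def by (rule image_strict_mono[OF inj_on_subset[OF inj subset_UNIV]])
  qed
  show ?thesis by (rule rank_eq[OF assms(1) h1 h2 h3 h4 h5])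
qed

lemma can_level:
  assumes "is_type \<tau>"
  shows "level (Can \<tau>) k = {A \<in> Can \<tau>. card A = ty_m \<tau> k}"
proof -
  have "fam_rank (Can \<tau>) A = k \<longleftrightarrow> card A = ty_m \<tau> k" if "A \<in> Can \<tau>" for A
  proof -
    from that obtain k' K f where r: "k' \<le> K" "valid \<tau> f k' K" "A = emb \<tau> k' K f ` {..<ty_m \<tau> k'}"
      unfolding Can_def by blast
    have r1: "fam_rank (Can \<tau>) A = k'" using can_rank[OF assms r(2) r(1)] r(3) by simp
    have r2: "card A = ty_m \<tau> k'" using emb_card r(3) by simp
    have r3: "(k' = k) = (ty_m \<tau> k' = ty_m \<tau> k)" using m_eq_iff[OF assms, of k' k] by simp
    show ?thesis using r1 r2 r3 by simp
  qed
  then show ?thesis unfolding level_def by (intro Collect_cong) blast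
qed

lemma valid_lower: "valid \<tau> f k (Suc K) \<Longrightarrow> valid \<tau> f k K"
  unfolding valid_def by auto

lemma phi_ge: "x \<le> phi \<tau> j a x"
  unfolding phi_def by auto

lemma can_coh:
  assumes "is_type \<tau>" "valid \<tau> f k K" "valid \<tau> f' k K" "k \<le> K"
    "u \<in> emb \<tau> k K f ` {..<ty_m \<tau> k}" "u \<in> emb \<tau> k K f' ` {..<ty_m \<tau> k}"
    "v \<in> emb \<tau> k K f ` {..<ty_m \<tau> k}" "v < u"
  shows "v \<in> emb \<tau> k K f' ` {..<ty_m \<tau> k}"
  using assms(2-)
proof (induction K arbitrary: u v)
  case 0 then show ?case by simp
next
  case (Suc K)
  show ?case
  proof (cases "k = Suc K")
    case True then show ?thesis using Suc.prems by (simp add: emb_le)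
  next
    case False
    then have kK: "k \<le> K" using Suc.prems by simp
    let ?Y = "emb \<tau> k K f ` {..<ty_m \<tau> k}" and ?Y' = "emb \<tau> k K f' ` {..<ty_m \<tau> k}"
    let ?a = "f K" and ?a' = "f' K"
    have v1: "valid \<tau> f k K" "valid \<tau> f' k K" using Suc.prems(1,2) valid_lower by blast+
    have X: "emb \<tau> k (Suc K) f ` {..<ty_m \<tau> k} = phi \<tau> K ?a ` ?Y"
      "emb \<tau> k (Suc K) f' ` {..<ty_m \<tau> k} = phi \<tau> K ?a' ` ?Y'" using kK by (simp_all add: image_comp)
    obtain y where y: "y \<in> ?Y" "u = phi \<tau> K ?a y" using Suc.prems(4) X(1) by blast
    obtain y' where y': "y' \<in> ?Y'" "u = phi \<tau> K ?a' y'" using Suc.prems(5) X(2) by blast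
    obtain z where z: "z \<in> ?Y" "v = phi \<tau> K ?a z" using Suc.prems(6) X(1) by blast
    have "phi \<tau> K ?a z < phi \<tau> K ?a y" using z y Suc.prems(7) by simp
    then have zy: "z < y" using strict_mono_less[OF phi_smono] by blast
    have YI: "?Y \<subseteq> {..<ty_m \<tau> K}" "?Y' \<subseteq> {..<ty_m \<tau> K}" using emb_range[OF assms(1) _ kK] v1 by blast+
    show ?thesis
    proof (cases "?a = ?a'")
      case True
      then have "phi \<tau> K ?a y = phi \<tau> K ?a y'" using y y' by simp
      then have "y = y'" using strict_mono_eq[OF phi_smono] by blast
      then have "z \<in> ?Y'" using Suc.IH[OF v1 kK] y y' z zy by blast
      then show ?thesis using X(2) z True by simp
    next
      case False
      have "u \<in> phi \<tau> K ?a ` {..<ty_m \<tau> K} \<inter> phi \<tau> K ?a' ` {..<ty_m \<tau> K}"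
        using y y' YI by blast
      then have ur: "u < ty_r \<tau> K" using phi_inter[OF assms(1) False] by blast
      have "y < ty_r \<tau> K" using ur y(2) phi_ge[of y \<tau> K ?a] by simp
      then have yu: "y = u" using y(2) by (simp add: phi_def)
      have "y' < ty_r \<tau> K" using ur y'(2) phi_ge[of y' \<tau> K ?a'] by simp
      then have "y' = u" using y'(2) by (simp add: phi_def)
      then have "z \<in> ?Y'" using Suc.IH[OF v1 kK] y y' z zy yu by blast
      moreover have "z < ty_r \<tau> K" using zy \<open>y < ty_r \<tau> K\<close> by simp
      ultimately have "phi \<tau> K ?a' z \<in> phi \<tau> K ?a' ` ?Y'" by blast
      moreover have "phi \<tau> K ?a' z = v" using \<open>z < ty_r \<tau> K\<close> z(2) by (simp add: phi_def)
      ultimately show ?thesis using X(2) by simp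
    qed
  qed
qed

lemma can_rep:
  assumes "is_type \<tau>" "A \<in> level (Can \<tau>) k"
  shows "\<exists>K f. k \<le> K \<and> K0 \<le> K \<and> valid \<tau> f k K \<and> A = emb \<tau> k K f ` {..<ty_m \<tau> k}"
proof -
  have A: "A \<in> Can \<tau>" "card A = ty_m \<tau> k" using assms can_level by auto
  obtain k' K f where r: "k' \<le> K" "valid \<tau> f k' K" "A = emb \<tau> k' K f ` {..<ty_m \<tau> k'}"
    using A(1) unfolding Can_def by blast
  have "ty_m \<tau> k' = ty_m \<tau> k" using A(2) r(3) emb_card by metis
  then have "k' = k" using m_eq_iff[OF assms(1)] by blast
  then obtain g where "valid \<tau> g k (max K K0)" "emb \<tau> k (max K K0) g = emb \<tau> k K f"
    using can_extend[OF assms(1) r(2) r(1), of "max K K0"] by auto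
  then show ?thesis using r \<open>k' = k\<close>
    by (intro exI[of _ "max K K0"] exI[of _ g]) auto
qed

lemma decomposes_dsys:
  assumes "decomposes F k n r S Gs" "\<forall>G\<in>level F k. finite G \<and> card G = m"
  shows "dsys n r m S Gs"
proof -
  have len: "length Gs = n" and sub: "set Gs \<subseteq> level F k" and U: "S = \<Union>(set Gs)"
    and R: "\<exists>R. (\<forall>i<n. \<forall>j<n. i \<noteq> j \<longrightarrow> Gs ! i \<inter> Gs ! j = R) \<and> card R = r \<and>
          set_less R (Gs ! 0 - R) \<and> (\<forall>i. Suc i < n \<longrightarrow> set_less (Gs ! i - R) (Gs ! Suc i - R))"
    using assms(1) unfolding decomposes_def by blast+
  have "\<forall>i<n. finite (Gs!i) \<and> card (Gs!i) = m"
  proof (intro allI impI)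
    fix i assume "i < n"
    then have "Gs!i \<in> level F k" using len sub nth_mem by blast
    then show "finite (Gs!i) \<and> card (Gs!i) = m" using assms(2) by blast
  qed
  then show ?thesis unfolding dsys_def using len U R by blast
qed

lemma valid_upd:
  assumes "valid \<tau> f (Suc k) K" "i < ty_n \<tau> k"
  shows "valid \<tau> (f(k:=i)) k K"
  unfolding valid_def
proof (intro allI impI)
  fix j assume "k \<le> j" "j < K"
  then show "(f(k:=i)) j < ty_n \<tau> j" using assms unfolding valid_def by (cases "j = k") auto
qed

theorem can_scheme:
  assumes "is_type \<tau>"
  shows "construction_scheme \<tau> (Can \<tau>)"
  unfolding construction_scheme_def
proof (intro conjI allI ballI impI)
  show "finite A" if "A \<in> Can \<tau>" for A using can_elems[OF that] by blast
next
  fix A :: "nat set" assume "finite A"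
  then obtain N where N: "A \<subseteq> {..<N}" using fin_bound by blast
  have "{..<ty_m \<tau> N} \<in> Can \<tau>" unfolding Can_def
    by (intro CollectI exI[of _ N] exI[of _ N] exI[of _ "\<lambda>_. 0"]) (simp add: valid_def emb_le)
  moreover have "A \<subseteq> {..<ty_m \<tau> N}" using N m_gt[OF assms, of N] by auto
  ultimately show "\<exists>F\<in>Can \<tau>. A \<subseteq> F" by blast
next
  fix k F assume "F \<in> level (Can \<tau>) k"
  then show "card F = ty_m \<tau> k" using can_level[OF assms] by auto
next
  fix k E F assume E: "E \<in> level (Can \<tau>) k" and F: "F \<in> level (Can \<tau>) k"
  obtain K1 f1 where r1: "k \<le> K1" "valid \<tau> f1 k K1" "E = emb \<tau> k K1 f1 ` {..<ty_m \<tau> k}"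
    using can_rep[OF assms E, of 0] by blast
  obtain K f2 where r2: "k \<le> K" "K1 \<le> K" "valid \<tau> f2 k K" "F = emb \<tau> k K f2 ` {..<ty_m \<tau> k}"
    using can_rep[OF assms F, of K1] by blast
  obtain g where g: "valid \<tau> g k K" "emb \<tau> k K g = emb \<tau> k K1 f1"
    using can_extend[OF assms r1(2) r1(1) r2(2)] by blast
  have E': "E = emb \<tau> k K g ` {..<ty_m \<tau> k}" using r1(3) g(2) by simp
  show "init_seg (E \<inter> F) E" unfolding init_seg_def
    using can_coh[OF assms g(1) r2(3) r2(1)] E' r2(4) by blast
  show "init_seg (E \<inter> F) F" unfolding init_seg_def
    using can_coh[OF assms r2(3) g(1) r2(1)] E' r2(4) by blast
next
  fix k S assume S: "S \<in> level (Can \<tau>) (Suc k)"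
  obtain K f where r: "Suc k \<le> K" "valid \<tau> f (Suc k) K" "S = emb \<tau> (Suc k) K f ` {..<ty_m \<tau> (Suc k)}"
    using can_rep[OF assms S, of 0] by blast
  have kK: "k < K" using r(1) by simp
  have lev: "\<forall>G\<in>level (Can \<tau>) k. finite G \<and> card G = ty_m \<tau> k" using can_level[OF assms] can_elems by auto
  have ds: "dsys (ty_n \<tau> k) (ty_r \<tau> k) (ty_m \<tau> k) S (cdec \<tau> k K f)"
    unfolding r(3) by (rule canon_dsys[OF assms kK])
  have n2: "2 \<le> ty_n \<tau> k" "ty_r \<tau> k < ty_m \<tau> k" using tyD[OF assms] by auto
  have inlev: "set (cdec \<tau> k K f) \<subseteq> level (Can \<tau>) k"
  proof
    fix G assume "G \<in> set (cdec \<tau> k K f)"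
    then obtain i where i: "i < ty_n \<tau> k" "G = emb \<tau> k K (f(k:=i)) ` {..<ty_m \<tau> k}"
      unfolding cdec_def by auto
    have v: "valid \<tau> (f(k:=i)) k K" using valid_upd[OF r(2) i(1)] .
    have "G \<in> Can \<tau>" unfolding Can_def using i(2) v kK
      by (intro CollectI exI[of _ k] exI[of _ K] exI[of _ "f(k:=i)"]) simp
    moreover have "card G = ty_m \<tau> k" using i(2) emb_card by simp
    ultimately show "G \<in> level (Can \<tau>) k" using can_level[OF assms] by simp
  qed
  have "decomposes (Can \<tau>) k (ty_n \<tau> k) (ty_r \<tau> k) S (cdec \<tau> k K f)"
    using ds inlev unfolding dsys_def decomposes_def by blast
  moreover have "Gs = cdec \<tau> k K f" if "decomposes (Can \<tau>) k (ty_n \<tau> k) (ty_r \<tau> k) S Gs" for Gs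
    using dsys_unique[OF decomposes_dsys[OF that lev] ds n2] .
  ultimately show "\<exists>!Gs. decomposes (Can \<tau>) k (ty_n \<tau> k) (ty_r \<tau> k) S Gs" by blast
qed

lemma csD:
  assumes "construction_scheme \<tau> F"
  shows "\<forall>A\<in>F. finite A" "\<forall>A. finite A \<longrightarrow> (\<exists>S\<in>F. A \<subseteq> S)"
    "\<forall>k. \<forall>A\<in>level F k. card A = ty_m \<tau> k"
    "\<forall>k. \<forall>E\<in>level F k. \<forall>S\<in>level F k. init_seg (E \<inter> S) E \<and> init_seg (E \<inter> S) S"
    "\<forall>k. \<forall>S\<in>level F (Suc k). \<exists>!Gs. decomposes F k (ty_n \<tau> k) (ty_r \<tau> k) S Gs"
  using assms unfolding construction_scheme_def by blast+

lemma cs_lvl: "A \<in> F \<Longrightarrow> A \<in> level F (fam_rank F A)"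
  unfolding level_def by simp

lemma cs_lc:
  assumes "construction_scheme \<tau> F" "A \<in> level F k"
  shows "finite A \<and> card A = ty_m \<tau> k"
proof -
  have "A \<in> F" using assms(2) unfolding level_def by simp
  then show ?thesis using csD(1,3)[OF assms(1)] assms(2) by blast
qed

lemma cs_dec:
  assumes "is_type \<tau>" "construction_scheme \<tau> F" "S \<in> level F (Suc k)"
  shows "\<exists>Gs. decomposes F k (ty_n \<tau> k) (ty_r \<tau> k) S Gs \<and> dsys (ty_n \<tau> k) (ty_r \<tau> k) (ty_m \<tau> k) S Gs"
proof -
  obtain Gs where G: "decomposes F k (ty_n \<tau> k) (ty_r \<tau> k) S Gs" using csD(5)[OF assms(2)] assms(3) by blast
  have "\<forall>G\<in>level F k. finite G \<and> card G = ty_m \<tau> k" using cs_lc[OF assms(2)] by blast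
  then show ?thesis using decomposes_dsys[OF G] G by blast
qed

lemma cs_U2:
  assumes "is_type \<tau>" "construction_scheme \<tau> F" "E \<in> level F k"
  shows "S \<in> level F l \<Longrightarrow> k \<le> l \<Longrightarrow> init_seg (E \<inter> S) E"
proof (induction l arbitrary: S)
  case 0
  then have k0: "k = 0" by simp
  show ?case using csD(4)[OF assms(2)] assms(3) "0.prems"(1) k0 by blast
next
  case (Suc l)
  show ?case
  proof (cases "k = Suc l")
    case True then show ?thesis using csD(4)[OF assms(2)] assms(3) Suc.prems(1) by blast
  next
    case False
    then have kl: "k \<le> l" using Suc.prems by simp
    obtain Gs where Gs: "decomposes F l (ty_n \<tau> l) (ty_r \<tau> l) S Gs" using cs_dec[OF assms(1,2) Suc.prems(1)] by blast
    have SU: "S = \<Union>(set Gs)" and sub: "set Gs \<subseteq> level F l" using Gs unfolding decomposes_def by blast+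
    have "init_seg (E \<inter> G) E" if "G \<in> set Gs" for G using Suc.IH[OF _ kl] sub that by blast
    then show ?thesis unfolding SU init_seg_def by blast
  qed
qed

lemma cs_U3:
  assumes "is_type \<tau>" "construction_scheme \<tau> F"
  shows "S \<in> level F l \<Longrightarrow> K \<le> l \<Longrightarrow> \<exists>G\<in>level F K. init_seg G S"
proof (induction l arbitrary: S)
  case 0
  then have "S \<in> level F K" by simp
  then show ?case by (rule bexI[rotated]) (simp add: init_seg_def)
next
  case (Suc l)
  have n2: "2 \<le> ty_n \<tau> l" "ty_r \<tau> l < ty_m \<tau> l" using tyD[OF assms(1)] by auto
  show ?case
  proof (cases "K = Suc l")
    case True
    then have "S \<in> level F K" using Suc.prems by simp
    then show ?thesis by (rule bexI[rotated]) (simp add: init_seg_def)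
  next
    case False
    then have Kl: "K \<le> l" using Suc.prems by simp
    obtain Gs where Gs: "decomposes F l (ty_n \<tau> l) (ty_r \<tau> l) S Gs" "dsys (ty_n \<tau> l) (ty_r \<tau> l) (ty_m \<tau> l) S Gs"
      using cs_dec[OF assms Suc.prems(1)] by blast
    obtain P where P: "\<forall>j\<le>ty_n \<tau> l. init_seg (P j) S" "\<forall>j\<le>ty_n \<tau> l. card (P j) = ty_r \<tau> l + j*(ty_m \<tau> l - ty_r \<tau> l)"
      "\<forall>j<ty_n \<tau> l. Gs!j = P 0 \<union> (P (Suc j) - P j)" "finite S" "P (Suc 0) = Gs!0"
      by (rule dsys_prefix[OF Gs(2) n2])
    have s1: "Suc 0 \<le> ty_n \<tau> l" using n2(1) by simp
    have "init_seg (P (Suc 0)) S" using P(1) s1 by blast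
    then have i0: "init_seg (Gs!0) S" using P(5) by simp
    have "length Gs = ty_n \<tau> l" "set Gs \<subseteq> level F l" using Gs(1) unfolding decomposes_def by blast+
    then have "Gs!0 \<in> level F l" using s1 nth_mem[of 0 Gs] by auto
    then obtain G where "G \<in> level F K" "init_seg G (Gs!0)" using Suc.IH Kl by blast
    then show ?thesis using i0 init_seg_trans by blast
  qed
qed

lemma cs_U4:
  assumes "is_type \<tau>" "construction_scheme \<tau> F"
  shows "{..<ty_m \<tau> K} \<in> level F K"
proof -
  obtain S where S: "S \<in> F" "{..<ty_m \<tau> K} \<subseteq> S" using csD(2)[OF assms(2)] by blast
  define l where "l = fam_rank F S"
  have Sl: "S \<in> level F l" using cs_lvl[OF S(1)] l_def by simp
  have fS: "finite S" "card S = ty_m \<tau> l" using cs_lc[OF assms(2) Sl] by auto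
  have "ty_m \<tau> K \<le> card S" using card_mono[OF fS(1) S(2)] by simp
  then have "K \<le> l" using fS(2) m_le_iff[OF assms(1)] by simp
  then obtain G where G: "G \<in> level F K" "init_seg G S" using cs_U3[OF assms Sl] by blast
  have "init_seg {..<ty_m \<tau> K} S" using S(2) unfolding init_seg_def by auto
  moreover have "card G = card {..<ty_m \<tau> K}" using cs_lc[OF assms(2) G(1)] by simp
  ultimately have "G = {..<ty_m \<tau> K}" using init_seg_eq_card[OF G(2) _ fS(1)] by blast
  then show ?thesis using G(1) by simp
qed

lemma cs_U5:
  assumes "is_type \<tau>" "construction_scheme \<tau> F" "k \<le> K"
  shows "\<forall>f. valid \<tau> f k K \<longrightarrow> emb \<tau> k K f ` {..<ty_m \<tau> k} \<in> level F k"
  using assms(3)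
proof (induction k rule: inc_induct)
  case base then show ?case using cs_U4[OF assms(1,2)] by (simp add: emb_le)
next
  case (step j)
  have n2: "2 \<le> ty_n \<tau> j" "ty_r \<tau> j < ty_m \<tau> j" using tyD[OF assms(1)] by auto
  show ?case
  proof (intro allI impI)
    fix f assume v: "valid \<tau> f j K"
    have v': "valid \<tau> f (Suc j) K" using v unfolding valid_def by simp
    have S: "emb \<tau> (Suc j) K f ` {..<ty_m \<tau> (Suc j)} \<in> level F (Suc j)" using step.IH v' by blast
    obtain Gs where Gs: "decomposes F j (ty_n \<tau> j) (ty_r \<tau> j) (emb \<tau> (Suc j) K f ` {..<ty_m \<tau> (Suc j)}) Gs"
      "dsys (ty_n \<tau> j) (ty_r \<tau> j) (ty_m \<tau> j) (emb \<tau> (Suc j) K f ` {..<ty_m \<tau> (Suc j)}) Gs"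
      using cs_dec[OF assms(1,2) S] by blast
    have eq: "Gs = cdec \<tau> j K f" using dsys_unique[OF Gs(2) canon_dsys[OF assms(1) step.hyps(2)] n2] .
    have fj: "f j < ty_n \<tau> j" using v step.hyps unfolding valid_def by simp
    have "cdec \<tau> j K f ! (f j) = emb \<tau> j K f ` {..<ty_m \<tau> j}" using cdec_nth[OF fj] by simp
    then have g1: "Gs ! (f j) = emb \<tau> j K f ` {..<ty_m \<tau> j}" using eq by simp
    have g2: "Gs ! (f j) \<in> set Gs" using fj eq cdec_len[of \<tau> j K f] by simp
    have "set Gs \<subseteq> level F j" using Gs(1) unfolding decomposes_def by blast
    then show "emb \<tau> j K f ` {..<ty_m \<tau> j} \<in> level F j" using g1 g2 by auto
  qed
qed

lemma cs_main:
  assumes ty: "is_type \<tau>" and cs: "construction_scheme \<tau> F" and Ek: "E \<in> level F k"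
  shows "\<forall>f. valid \<tau> f j N \<longrightarrow> j \<le> N \<longrightarrow> E \<subseteq> emb \<tau> j N f ` {..<ty_m \<tau> j} \<longrightarrow> k \<le> j \<longrightarrow> E \<in> Can \<tau>"
proof (induction j)
  case 0
  show ?case
  proof (intro allI impI)
    fix f assume v: "valid \<tau> f 0 N" and "0 \<le> N" and sub: "E \<subseteq> emb \<tau> 0 N f ` {..<ty_m \<tau> 0}" and "k \<le> 0"
    then have k0: "k = 0" by simp
    have S0: "emb \<tau> 0 N f ` {..<ty_m \<tau> 0} \<in> level F 0" using cs_U5[OF ty cs] v by blast
    have "card E = card (emb \<tau> 0 N f ` {..<ty_m \<tau> 0})" using cs_lc[OF cs Ek] cs_lc[OF cs S0] k0 by simp
    then have "E = emb \<tau> 0 N f ` {..<ty_m \<tau> 0}" using card_subset_eq[OF _ sub] by simp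
    then show "E \<in> Can \<tau>" unfolding Can_def using v by blast
  qed
next
  case (Suc j)
  show ?case
  proof (intro allI impI)
    fix f assume v: "valid \<tau> f (Suc j) N" and jN: "Suc j \<le> N" and sub: "E \<subseteq> emb \<tau> (Suc j) N f ` {..<ty_m \<tau> (Suc j)}"
      and kj: "k \<le> Suc j"
    let ?S = "emb \<tau> (Suc j) N f ` {..<ty_m \<tau> (Suc j)}"
    have S: "?S \<in> level F (Suc j)" using cs_U5[OF ty cs jN] v by blast
    show "E \<in> Can \<tau>"
    proof (cases "k = Suc j")
      case True
      have "card E = card ?S" using cs_lc[OF cs Ek] cs_lc[OF cs S] True by simp
      then have "E = ?S" using card_subset_eq[OF _ sub] by simp
      then show ?thesis unfolding Can_def using v jN by blast
    next
      case False
      then have kj': "k \<le> j" using kj by simp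
      have jN': "j < N" using jN by simp
      have ds: "dsys (ty_n \<tau> j) (ty_r \<tau> j) (ty_m \<tau> j) ?S (cdec \<tau> j N f)" by (rule canon_dsys[OF ty jN'])
      have SU: "?S = \<Union>(set (cdec \<tau> j N f))" using ds unfolding dsys_def by blast
      have cE: "finite E" "card E = ty_m \<tau> k" using cs_lc[OF cs Ek] by auto
      have "card E > 0" using cE(2) m_gt[OF ty, of k] by simp
      then have Ene: "E \<noteq> {}" by auto
      define x where "x = Max E"
      have xE: "x \<in> E" using Ene cE(1) x_def by simp
      have xmax: "e \<le> x" if "e \<in> E" for e using cE(1) that x_def by simp
      have "x \<in> \<Union>(set (cdec \<tau> j N f))" using xE sub SU by blast
      then obtain G where G: "G \<in> set (cdec \<tau> j N f)" "x \<in> G" by blast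
      then obtain i where i: "i < ty_n \<tau> j" "G = emb \<tau> j N (f(j:=i)) ` {..<ty_m \<tau> j}"
        unfolding cdec_def by auto
      have vi: "valid \<tau> (f(j:=i)) j N" by (rule valid_upd[OF v i(1)])
      have GF: "G \<in> level F j" using cs_U5[OF ty cs, of j N] jN' vi i(2) by simp
      have ini: "init_seg (E \<inter> G) E" using cs_U2[OF ty cs Ek GF kj'] .
      have "E \<subseteq> G"
      proof
        fix e assume e: "e \<in> E"
        show "e \<in> G"
        proof (cases "e = x")
          case True then show ?thesis using G by simp
        next
          case False
          then have "e < x" using xmax[OF e] by simp
          then show ?thesis using ini e xE G(2) unfolding init_seg_def by blast
        qed
      qed
      then show ?thesis using Suc.IH vi jN' i(2) kj' by auto
    qed
  qed
qed

lemma scheme_eq_can: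
  assumes ty: "is_type \<tau>" and cs: "construction_scheme \<tau> F"
  shows "F = Can \<tau>"
proof
  show "Can \<tau> \<subseteq> F"
  proof
    fix A assume "A \<in> Can \<tau>"
    then obtain k K f where "k \<le> K" "valid \<tau> f k K" "A = emb \<tau> k K f ` {..<ty_m \<tau> k}" unfolding Can_def by blast
    then have "A \<in> level F k" using cs_U5[OF ty cs] by blast
    then show "A \<in> F" unfolding level_def by blast
  qed
next
  show "F \<subseteq> Can \<tau>"
  proof
    fix E assume E: "E \<in> F"
    define k where "k = fam_rank F E"
    have Ek: "E \<in> level F k" using cs_lvl[OF E] k_def by simp
    have cE: "finite E" "card E = ty_m \<tau> k" using cs_lc[OF cs Ek] by auto
    obtain N where N: "E \<subseteq> {..<N}" using cE(1) fin_bound by blast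
    have EN: "E \<subseteq> {..<ty_m \<tau> N}" using N m_gt[OF ty, of N] by auto
    have "card E \<le> ty_m \<tau> N" using card_mono[OF _ EN] by simp
    then have kN: "k \<le> N" using cE(2) m_le_iff[OF ty] by simp
    have v0: "valid \<tau> (\<lambda>_. 0) N N" unfolding valid_def by simp
    have "emb \<tau> N N (\<lambda>_. 0) ` {..<ty_m \<tau> N} = {..<ty_m \<tau> N}" by (simp add: emb_le)
    then show "E \<in> Can \<tau>" using cs_main[OF ty cs Ek, of N N] v0 EN kN by simp
  qed
qed

theorem mainTheorem19:
  assumes "is_type \<tau>"
  shows "\<exists>!\<F>. construction_scheme \<tau> \<F>"
proof (rule ex1I[of _ "Can \<tau>"])
  show "construction_scheme \<tau> (Can \<tau>)" by (rule can_scheme[OF assms])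
next
  fix F assume "construction_scheme \<tau> F"
  then show "F = Can \<tau>" by (rule scheme_eq_can[OF assms])
qed

end
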